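(* Let $0\to A\to B\xrightarrow{g} C\to 0$ be a short exact sequence of abelian groups with $C$ torsion-free and $B/nB$ finite for every $n\in\mathbb Z_{>0}$, considered as a three-sorted structure as described below. If $X\subseteq B$ is definable, then there is $n\in\mathbb Z_{>0}$ such that $X$ is almost saturated with respect to the quotient map $B\to B/nA$.
   Context: The structure has three sorts $A$, $B$, $C$, the group language $(+,0,-)$ on $B$, the maps $A\to B$ and $g:B\to C$, arbitrary additional constants, relations and functions on $A$ and on $C$ (extending their group languages), and for each $n\in\mathbb Z_{>0}$ a predicate interpreted as $nB$. (Motivating example: $1\to k^\times\to RV\to\Gamma\to 0$ for a valued field, with field structure on $k$ and ordered group structure on $\Gamma$.) A definable set $Z\subseteq X$ is almost saturated with respect to a map $f:X\to Y$ if $f(Z)\cap f(X\setminus Z)$ is finite. *)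

theory Defs
  imports Main
begin

fun nmul :: "nat \<Rightarrow> 'a::ab_group_add \<Rightarrow> 'a" where
  "nmul 0 x = 0"
| "nmul (Suc n) x = x + nmul n x"

text \<open>Sort A: group language plus arbitrary function symbols (constants are
0-ary functions) of type 'fa and relation symbols of type 'ra.\<close>

datatype 'fa tmA =
    VarA nat
  | ZeroA
  | AddA "'fa tmA" "'fa tmA"
  | NegA "'fa tmA"
  | FunA 'fa "'fa tmA list"

datatype 'fa tmB =
    VarB nat
  | ZeroB
  | AddB "'fa tmB" "'fa tmB"
  | NegB "'fa tmB"
  | Iota "'fa tmA"

datatype ('fa, 'fc) tmC =
    VarC nat
  | ZeroC
  | AddC "('fa, 'fc) tmC" "('fa, 'fc) tmC"
  | NegC "('fa, 'fc) tmC"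
  | FunC 'fc "('fa, 'fc) tmC list"
  | Gmap "'fa tmB"

datatype ('ra, 'fa, 'rc, 'fc) fml =
    EqA "'fa tmA" "'fa tmA"
  | EqB "'fa tmB" "'fa tmB"
  | EqC "('fa, 'fc) tmC" "('fa, 'fc) tmC"
  | RelA 'ra "'fa tmA list"
  | RelC 'rc "('fa, 'fc) tmC list"
  | DivB nat "'fa tmB"      \<comment> \<open>the predicate for nB, used for n > 0\<close>
  | Neg "('ra, 'fa, 'rc, 'fc) fml"
  | Conj "('ra, 'fa, 'rc, 'fc) fml" "('ra, 'fa, 'rc, 'fc) fml"
  | ExA nat "('ra, 'fa, 'rc, 'fc) fml"
  | ExB nat "('ra, 'fa, 'rc, 'fc) fml"
  | ExC nat "('ra, 'fa, 'rc, 'fc) fml"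

primrec evalA :: "('fa \<Rightarrow> 'a list \<Rightarrow> 'a) \<Rightarrow> (nat \<Rightarrow> 'a::ab_group_add) \<Rightarrow> 'fa tmA \<Rightarrow> 'a" where
  "evalA FA e (VarA i) = e i"
| "evalA FA e ZeroA = 0"
| "evalA FA e (AddA s t) = evalA FA e s + evalA FA e t"
| "evalA FA e (NegA s) = - evalA FA e s"
| "evalA FA e (FunA f ts) = FA f (map (evalA FA e) ts)"

primrec evalB :: "('a \<Rightarrow> 'b) \<Rightarrow> ('fa \<Rightarrow> 'a list \<Rightarrow> 'a) \<Rightarrow> (nat \<Rightarrow> 'a::ab_group_add)
    \<Rightarrow> (nat \<Rightarrow> 'b::ab_group_add) \<Rightarrow> 'fa tmB \<Rightarrow> 'b" where
  "evalB \<iota> FA eA eB (VarB i) = eB i"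
| "evalB \<iota> FA eA eB ZeroB = 0"
| "evalB \<iota> FA eA eB (AddB s t) = evalB \<iota> FA eA eB s + evalB \<iota> FA eA eB t"
| "evalB \<iota> FA eA eB (NegB s) = - evalB \<iota> FA eA eB s"
| "evalB \<iota> FA eA eB (Iota s) = \<iota> (evalA FA eA s)"

primrec evalC :: "('a \<Rightarrow> 'b) \<Rightarrow> ('b \<Rightarrow> 'c) \<Rightarrow> ('fa \<Rightarrow> 'a list \<Rightarrow> 'a) \<Rightarrow> ('fc \<Rightarrow> 'c list \<Rightarrow> 'c)
    \<Rightarrow> (nat \<Rightarrow> 'a::ab_group_add) \<Rightarrow> (nat \<Rightarrow> 'b::ab_group_add) \<Rightarrow> (nat \<Rightarrow> 'c::ab_group_add)
    \<Rightarrow> ('fa, 'fc) tmC \<Rightarrow> 'c" where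
  "evalC \<iota> g FA FC eA eB eC (VarC i) = eC i"
| "evalC \<iota> g FA FC eA eB eC ZeroC = 0"
| "evalC \<iota> g FA FC eA eB eC (AddC s t) = evalC \<iota> g FA FC eA eB eC s + evalC \<iota> g FA FC eA eB eC t"
| "evalC \<iota> g FA FC eA eB eC (NegC s) = - evalC \<iota> g FA FC eA eB eC s"
| "evalC \<iota> g FA FC eA eB eC (FunC f ts) = FC f (map (evalC \<iota> g FA FC eA eB eC) ts)"
| "evalC \<iota> g FA FC eA eB eC (Gmap s) = g (evalB \<iota> FA eA eB s)"

primrec sat :: "('a \<Rightarrow> 'b) \<Rightarrow> ('b \<Rightarrow> 'c) \<Rightarrow> ('ra \<Rightarrow> 'a list \<Rightarrow> bool) \<Rightarrow> ('fa \<Rightarrow> 'a list \<Rightarrow> 'a)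
    \<Rightarrow> ('rc \<Rightarrow> 'c list \<Rightarrow> bool) \<Rightarrow> ('fc \<Rightarrow> 'c list \<Rightarrow> 'c)
    \<Rightarrow> (nat \<Rightarrow> 'a::ab_group_add) \<Rightarrow> (nat \<Rightarrow> 'b::ab_group_add) \<Rightarrow> (nat \<Rightarrow> 'c::ab_group_add)
    \<Rightarrow> ('ra, 'fa, 'rc, 'fc) fml \<Rightarrow> bool" where
  "sat \<iota> g RA FA RC FC eA eB eC (EqA s t) = (evalA FA eA s = evalA FA eA t)"
| "sat \<iota> g RA FA RC FC eA eB eC (EqB s t) = (evalB \<iota> FA eA eB s = evalB \<iota> FA eA eB t)"
| "sat \<iota> g RA FA RC FC eA eB eC (EqC s t) =
     (evalC \<iota> g FA FC eA eB eC s = evalC \<iota> g FA FC eA eB eC t)"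
| "sat \<iota> g RA FA RC FC eA eB eC (RelA r ts) = RA r (map (evalA FA eA) ts)"
| "sat \<iota> g RA FA RC FC eA eB eC (RelC r ts) = RC r (map (evalC \<iota> g FA FC eA eB eC) ts)"
| "sat \<iota> g RA FA RC FC eA eB eC (DivB n s) = (\<exists>y. evalB \<iota> FA eA eB s = nmul n y)"
| "sat \<iota> g RA FA RC FC eA eB eC (Neg \<phi>) = (\<not> sat \<iota> g RA FA RC FC eA eB eC \<phi>)"
| "sat \<iota> g RA FA RC FC eA eB eC (Conj \<phi> \<psi>) =
     (sat \<iota> g RA FA RC FC eA eB eC \<phi> \<and> sat \<iota> g RA FA RC FC eA eB eC \<psi>)"
| "sat \<iota> g RA FA RC FC eA eB eC (ExA i \<phi>) = (\<exists>x. sat \<iota> g RA FA RC FC (eA(i := x)) eB eC \<phi>)"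
| "sat \<iota> g RA FA RC FC eA eB eC (ExB i \<phi>) = (\<exists>x. sat \<iota> g RA FA RC FC eA (eB(i := x)) eC \<phi>)"
| "sat \<iota> g RA FA RC FC eA eB eC (ExC i \<phi>) = (\<exists>x. sat \<iota> g RA FA RC FC eA eB (eC(i := x)) \<phi>)"

text \<open>A subset X of the sort B is definable (with parameters) if there are a formula
\<phi> and an assignment of parameters such that X = {b. \<phi>(b)} with b in B-variable 0.
The formula's symbol types are those of the given structure.\<close>

definition definable_B ::
  "('a::ab_group_add \<Rightarrow> 'b::ab_group_add) \<Rightarrow> ('b \<Rightarrow> 'c::ab_group_add) \<Rightarrow> ('ra \<Rightarrow> 'a list \<Rightarrow> bool)
   \<Rightarrow> ('fa \<Rightarrow> 'a list \<Rightarrow> 'a) \<Rightarrow> ('rc \<Rightarrow> 'c list \<Rightarrow> bool) \<Rightarrow> ('fc \<Rightarrow> 'c list \<Rightarrow> 'c)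
   \<Rightarrow> 'b set \<Rightarrow> bool" where
  "definable_B \<iota> g RA FA RC FC X \<longleftrightarrow>
     (\<exists>(\<phi> :: ('ra, 'fa, 'rc, 'fc) fml) eA eB eC.
        X = {b. sat \<iota> g RA FA RC FC eA (eB(0 := b)) eC \<phi>})"

definition almost_saturated :: "('x \<Rightarrow> 'y) \<Rightarrow> 'x set \<Rightarrow> 'x set \<Rightarrow> bool" where
  "almost_saturated f X Z \<longleftrightarrow> finite (f ` Z \<inter> f ` (X - Z))"

definition quot_nA :: "('a::ab_group_add \<Rightarrow> 'b::ab_group_add) \<Rightarrow> nat \<Rightarrow> 'b \<Rightarrow> 'b set" where
  "quot_nA \<iota> n b = {b + nmul n (\<iota> a) | a. True}"

definition quot_nB :: "nat \<Rightarrow> 'b::ab_group_add \<Rightarrow> 'b set" where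
  "quot_nB n b = {b + nmul n y | y. True}"

end

theory Submission
  imports Defs
begin


lemma nmul_0_right[simp]: "nmul n (0::'a::ab_group_add) = 0"
  by (induct n) auto
lemma nmul_add_right: "nmul n (x + y) = nmul n x + nmul n (y::'a::ab_group_add)"
  by (induct n) (auto simp: algebra_simps)
lemma nmul_neg_right: "nmul n (- x) = - nmul n (x::'a::ab_group_add)"
  by (induct n) (auto simp: algebra_simps)
lemma nmul_diff_right: "nmul n (x - y) = nmul n x - nmul n (y::'a::ab_group_add)"
  using nmul_add_right[of n x "-y"] nmul_neg_right[of n y] by simp
lemma nmul_add_left: "nmul (m + n) x = nmul m x + nmul n (x::'a::ab_group_add)"
  by (induct m) (auto simp: algebra_simps)
lemma nmul_mult: "nmul (m * n) x = nmul m (nmul n (x::'a::ab_group_add))"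
  by (induct m) (auto simp: nmul_add_left)

lemma hom_0: assumes "\<And>x y. h (x + y) = h x + (h y::'b::ab_group_add)" shows "h (0::'a::ab_group_add) = 0"
  using assms[of 0 0] by simp
lemma hom_neg: assumes "\<And>x y. h (x + y) = h x + (h y::'b::ab_group_add)" shows "h (- (x::'a::ab_group_add)) = - h x"
  using assms[of x "-x"] hom_0[of h, OF assms] by (simp add: eq_neg_iff_add_eq_0 add.commute)
lemma hom_diff: assumes "\<And>x y. h (x + y) = h x + (h y::'b::ab_group_add)" shows "h ((x::'a::ab_group_add) - y) = h x - h y"
  using assms[of x "-y"] hom_neg[of h, OF assms] by simp
lemma hom_nmul: assumes "\<And>x y. h (x + y) = h x + (h y::'b::ab_group_add)" shows "h (nmul n (x::'a::ab_group_add)) = nmul n (h x)"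
  by (induct n) (auto simp: assms hom_0[of h, OF assms])
lemma hom_sum: assumes "\<And>x y. h (x + y) = h x + (h y::'b::ab_group_add)" shows "h (sum (f::_ \<Rightarrow> 'a::ab_group_add) S) = sum (\<lambda>l. h (f l)) S"
  by (induct S rule: infinite_finite_induct) (auto simp: assms hom_0[of h, OF assms])

definition zmul :: "int \<Rightarrow> 'a::ab_group_add \<Rightarrow> 'a" where
  "zmul k x = nmul (nat k) x - nmul (nat (-k)) x"

lemma zmul_int: "zmul (int n) x = nmul n x" by (simp add: zmul_def)
lemma zmul_pos: "0 \<le> k \<Longrightarrow> zmul k x = nmul (nat k) x" by (simp add: zmul_def)
lemma zmul_0[simp]: "zmul 0 x = 0" by (simp add: zmul_def)
lemma zmul_1: "zmul 1 x = x" by (simp add: zmul_def)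
lemma zmul_0_right[simp]: "zmul k 0 = 0" by (simp add: zmul_def)
lemma zmul_neg_left: "zmul (- k) x = - zmul k x" by (simp add: zmul_def)
lemma zmul_add_right: "zmul k (x + y) = zmul k x + zmul k y"
  by (simp add: zmul_def nmul_add_right algebra_simps)
lemma zmul_neg_right: "zmul k (- x) = - zmul k x"
  by (simp add: zmul_def nmul_neg_right algebra_simps)
lemma zmul_diff_right: "zmul k (x - y) = zmul k x - zmul k y"
  using zmul_add_right[of k x "-y"] zmul_neg_right[of k y] by simp
lemma zmul_add_left: "zmul (a + b) x = zmul a x + zmul b x"
proof -
  have e: "nat a + nat b + nat (-(a+b)) = nat (a+b) + nat (-a) + nat (-b)" by linarith
  have "nmul (nat a + nat b + nat (-(a+b))) x = nmul (nat (a+b) + nat (-a) + nat (-b)) x"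
    by (simp only: e)
  hence "nmul (nat a) x + nmul (nat b) x + nmul (nat (-(a+b))) x = nmul (nat (a+b)) x + nmul (nat (-a)) x + nmul (nat (-b)) x"
    by (simp add: nmul_add_left)
  hence "nmul (nat (a+b)) x = nmul (nat a) x + nmul (nat b) x + nmul (nat (-(a+b))) x - nmul (nat (-a)) x - nmul (nat (-b)) x"
    by (simp add: algebra_simps)
  thus ?thesis by (simp add: zmul_def algebra_simps)
qed
lemma zmul_diff_left: "zmul (a - b) x = zmul a x - zmul b x"
  using zmul_add_left[of a "-b" x] zmul_neg_left[of b x] by simp
lemma zmul_mult_int: "zmul (int n * b) x = nmul n (zmul b x)"
  by (induct n) (auto simp: zmul_add_left algebra_simps)
lemma zmul_mult: "zmul (a * b) x = zmul a (zmul b x)"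
proof (cases "0 \<le> a")
  case True
  then obtain n where "a = int n" using nonneg_int_cases by blast
  thus ?thesis by (simp add: zmul_mult_int zmul_int)
next
  case False
  then obtain n where "a = - int n" by (metis neg_int_cases linorder_not_le less_imp_le)
  thus ?thesis by (simp add: zmul_neg_left zmul_mult_int zmul_int)
qed
lemma zmul_nmul_comm: "zmul k (nmul n x) = nmul n (zmul k x)"
  by (metis zmul_int zmul_mult mult.commute)
lemma zmul_sum_left: "zmul (sum f S) x = sum (\<lambda>l. zmul (f l) x) S"
  by (induct S rule: infinite_finite_induct) (auto simp: zmul_add_left)
lemma zmul_sum_right: "zmul k (sum f S) = sum (\<lambda>l. zmul k (f l)) S"
  by (induct S rule: infinite_finite_induct) (auto simp: zmul_add_right)
lemma hom_zmul: assumes "\<And>x y. h (x + y) = h x + (h y::'b::ab_group_add)" shows "h (zmul k (x::'a::ab_group_add)) = zmul k (h x)"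
  by (simp add: zmul_def hom_diff[of h, OF assms] hom_nmul[of h, OF assms])

lemma bezout_set:
  fixes k :: "'x \<Rightarrow> int"
  assumes "finite J"
  shows "\<exists>s G. (\<Sum>F\<in>J. s F * k F) = G \<and> (\<forall>F\<in>J. G dvd k F) \<and> 0 \<le> G \<and> (G = 0 \<longrightarrow> (\<forall>F\<in>J. k F = 0))"
  using assms
proof (induct J rule: finite_induct)
  case empty then show ?case by auto
next
  case (insert a J)
  then obtain s G where s: "(\<Sum>F\<in>J. s F * k F) = G" "\<forall>F\<in>J. G dvd k F" "0 \<le> G" "G = 0 \<longrightarrow> (\<forall>F\<in>J. k F = 0)" by blast
  obtain u v where uv: "u * k a + v * G = gcd (k a) G" using bezout_int by blast
  let ?s = "\<lambda>F. if F = a then u else v * s F"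
  have "(\<Sum>F\<in>insert a J. ?s F * k F) = u * k a + (\<Sum>F\<in>J. v * (s F * k F))"
    using insert by (simp add: mult.assoc) (intro sum.cong, auto)
  also have "\<dots> = gcd (k a) G" using uv s(1) by (simp add: sum_distrib_left[symmetric])
  finally have 1: "(\<Sum>F\<in>insert a J. ?s F * k F) = gcd (k a) G" .
  have 2: "\<forall>F\<in>insert a J. gcd (k a) G dvd k F"
    using s(2) by (auto intro: dvd_trans)
  show ?case using 1 2 s(4) by (intro exI[of _ ?s] exI[of _ "gcd (k a) G"]) auto
qed




inductive_set Lin :: "((nat \<Rightarrow> 'b::ab_group_add) \<Rightarrow> 'b) set" where
  proj: "(\<lambda>e. e i) \<in> Lin"
| zero: "(\<lambda>e. 0) \<in> Lin"
| add: "F \<in> Lin \<Longrightarrow> G \<in> Lin \<Longrightarrow> (\<lambda>e. F e + G e) \<in> Lin"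
| neg: "F \<in> Lin \<Longrightarrow> (\<lambda>e. - F e) \<in> Lin"

lemma Lin_diff: "F \<in> Lin \<Longrightarrow> G \<in> Lin \<Longrightarrow> (\<lambda>e. F e - G e) \<in> Lin"
  using Lin.add[OF _ Lin.neg[of G]] by simp

lemma Lin_nmul: "F \<in> Lin \<Longrightarrow> (\<lambda>e. nmul n (F e)) \<in> Lin"
  by (induct n) (auto intro: Lin.intros)

lemma Lin_zmul: "F \<in> Lin \<Longrightarrow> (\<lambda>e. zmul k (F e)) \<in> Lin"
  unfolding zmul_def by (intro Lin_diff Lin_nmul)

lemma Lin_sum: "finite S \<Longrightarrow> (\<forall>l\<in>S. f l \<in> Lin) \<Longrightarrow> (\<lambda>e. \<Sum>l\<in>S. f l e) \<in> Lin"
  by (induct S rule: finite_induct) (auto intro: Lin.intros)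

lemma Lin_subst: "F \<in> Lin \<Longrightarrow> (\<lambda>e. F (e(i := 0))) \<in> Lin"
proof (induct rule: Lin.induct)
  case (proj j)
  show ?case by (cases "j = i") (auto intro: Lin.intros)
qed (auto intro: Lin.intros)

lemma Lin_decomp: "F \<in> Lin \<Longrightarrow> \<exists>k. \<forall>e x. F (e(i := x)) = zmul k x + F (e(i := 0))"
proof (induct rule: Lin.induct)
  case (proj j)
  show ?case
  proof (cases "j = i")
    case True thus ?thesis by (intro exI[of _ 1]) (simp add: zmul_1)
  next
    case False thus ?thesis by (intro exI[of _ 0]) simp
  qed
next
  case zero thus ?case by (intro exI[of _ 0]) simp
next
  case (add F G)
  then obtain k1 k2 where "\<forall>e x. F (e(i := x)) = zmul k1 x + F (e(i := 0))"
      "\<forall>e x. G (e(i := x)) = zmul k2 x + G (e(i := 0))" by blast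
  hence "\<forall>e x. F (e(i := x)) + G (e(i := x)) = zmul (k1 + k2) x + (F (e(i := 0)) + G (e(i := 0)))"
    unfolding zmul_add_left by (metis add.assoc add.left_commute)
  thus ?case by blast
next
  case (neg F)
  then obtain k1 where "\<forall>e x. F (e(i := x)) = zmul k1 x + F (e(i := 0))" by blast
  hence "\<forall>e x. - F (e(i := x)) = zmul (- k1) x + (- F (e(i := 0)))"
    unfolding zmul_neg_left by (metis minus_add_distrib)
  thus ?case by blast
qed

definition kc :: "nat \<Rightarrow> ((nat \<Rightarrow> 'b::ab_group_add) \<Rightarrow> 'b) \<Rightarrow> int" where
  "kc i F = (SOME k. \<forall>e x. F (e(i := x)) = zmul k x + F (e(i := 0)))"

lemma kc_spec: "F \<in> Lin \<Longrightarrow> F (e(i := x)) = zmul (kc i F) x + F (e(i := 0))"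
  using someI_ex[OF Lin_decomp[of F i]] unfolding kc_def by blast




locale ses =
  fixes \<iota> :: "'a::ab_group_add \<Rightarrow> 'b::ab_group_add" and g :: "'b \<Rightarrow> 'c::ab_group_add"
  assumes iota_hom: "\<And>x y. \<iota> (x + y) = \<iota> x + \<iota> y"
    and iota_inj: "inj \<iota>"
    and g_hom: "\<And>x y. g (x + y) = g x + g y"
    and exact: "{b. g b = 0} = range \<iota>"
    and C_tf: "\<And>n c. n > 0 \<Longrightarrow> nmul n (c::'c) = 0 \<Longrightarrow> c = 0"
    and B_fin: "\<And>n. n > 0 \<Longrightarrow> finite (range (quot_nB n :: 'b \<Rightarrow> 'b set))"
begin

lemma iota0: "\<iota> 0 = 0" by (rule hom_0[OF iota_hom])
lemma iota_neg: "\<iota> (- x) = - \<iota> x" by (rule hom_neg[OF iota_hom])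
lemma g0: "g 0 = 0" by (rule hom_0[OF g_hom])
lemma g_neg: "g (- x) = - g x" by (rule hom_neg[OF g_hom])
lemma g_diff: "g (x - y) = g x - g y" by (rule hom_diff[OF g_hom])
lemma g_nmul: "g (nmul n x) = nmul n (g x)" by (rule hom_nmul[OF g_hom])
lemma g_zmul: "g (zmul k x) = zmul k (g x)" by (rule hom_zmul[OF g_hom])
lemma g_sum: "g (sum f S) = sum (\<lambda>l. g (f l)) S" by (rule hom_sum[OF g_hom])
lemma g_iota[simp]: "g (\<iota> a) = 0" using exact by auto
lemma ker_g: "g b = 0 \<Longrightarrow> \<exists>a. b = \<iota> a" using exact by auto

lemma C_tf_z: "k \<noteq> 0 \<Longrightarrow> zmul k (c::'c) = 0 \<Longrightarrow> c = 0"
proof (cases "0 \<le> k")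
  case True
  assume "k \<noteq> 0" "zmul k c = 0"
  with True show ?thesis using C_tf[of "nat k" c] by (simp add: zmul_pos)
next
  case False
  assume "k \<noteq> 0" "zmul k c = 0"
  hence "zmul (-k) c = 0" by (simp add: zmul_neg_left)
  with False show ?thesis using C_tf[of "nat (-k)" c] by (simp add: zmul_pos)
qed

lemma C_tf_inj: "k \<noteq> 0 \<Longrightarrow> zmul k (c1::'c) = zmul k c2 \<Longrightarrow> c1 = c2"
  using C_tf_z[of k "c1 - c2"] by (simp add: zmul_diff_right)

definition rel :: "((nat \<Rightarrow> 'b) \<Rightarrow> 'b) set \<Rightarrow> nat \<Rightarrow> (nat \<Rightarrow> 'b) \<Rightarrow> (nat \<Rightarrow> 'b) \<Rightarrow> bool" where
  "rel FS N e1 e2 \<longleftrightarrow> (\<forall>F\<in>FS. g (F e1) = g (F e2) \<and> (\<exists>y. F e1 - F e2 = nmul N y)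
      \<and> (g (F e1) = 0 \<longrightarrow> F e1 = F e2))"

lemma rel_sym: assumes r: "rel FS N e1 e2" shows "rel FS N e2 e1"
  unfolding rel_def
proof (intro ballI conjI impI)
  fix F assume F: "F \<in> FS"
  have h: "g (F e1) = g (F e2)" "\<exists>y. F e1 - F e2 = nmul N y" "g (F e1) = 0 \<longrightarrow> F e1 = F e2"
    using r F unfolding rel_def by blast+
  then obtain y where "F e1 - F e2 = nmul N y" by blast
  hence "F e2 - F e1 = nmul N (- y)" by (simp add: nmul_neg_right) (simp add: algebra_simps)
  thus "\<exists>y. F e2 - F e1 = nmul N y" by blast
  show "g (F e2) = g (F e1)" using h(1) by simp
  show "g (F e2) = 0 \<Longrightarrow> F e2 = F e1" using h(1,3) by simp
qed

lemma rel_mono: assumes r: "rel FS N e1 e2" and s: "FS' \<subseteq> FS" and d: "M dvd N" shows "rel FS' M e1 e2"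
  unfolding rel_def
proof (intro ballI conjI impI)
  fix F assume F': "F \<in> FS'"
  hence F: "F \<in> FS" using s by blast
  have h: "g (F e1) = g (F e2)" "\<exists>y. F e1 - F e2 = nmul N y" "g (F e1) = 0 \<longrightarrow> F e1 = F e2"
    using r F unfolding rel_def by blast+
  then obtain y where "F e1 - F e2 = nmul N y" by blast
  moreover obtain q where "N = M * q" using d by blast
  ultimately have "F e1 - F e2 = nmul M (nmul q y)" by (simp add: nmul_mult)
  thus "\<exists>y. F e1 - F e2 = nmul M y" by blast
  show "g (F e1) = g (F e2)" using h by simp
  show "g (F e1) = 0 \<Longrightarrow> F e1 = F e2" using h by simp
qed

definition good :: "((nat \<Rightarrow> 'a) \<Rightarrow> (nat \<Rightarrow> 'b) \<Rightarrow> (nat \<Rightarrow> 'c) \<Rightarrow> bool) \<Rightarrow> bool" where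
  "good P \<longleftrightarrow> (\<exists>FS N. finite FS \<and> FS \<subseteq> Lin \<and> 0 < N \<and>
      (\<forall>eA e1 e2 eC. rel FS N e1 e2 \<longrightarrow> P eA e1 eC \<longrightarrow> P eA e2 eC))"

lemma goodI: "finite FS \<Longrightarrow> FS \<subseteq> Lin \<Longrightarrow> 0 < N \<Longrightarrow>
   (\<And>eA e1 e2 eC. rel FS N e1 e2 \<Longrightarrow> P eA e1 eC \<Longrightarrow> P eA e2 eC) \<Longrightarrow> good P"
  unfolding good_def by blast

lemma goodE: assumes "good P"
  obtains FS N where "finite FS" "FS \<subseteq> Lin" "0 < N"
    "\<And>eA e1 e2 eC. rel FS N e1 e2 \<Longrightarrow> P eA e1 eC \<Longrightarrow> P eA e2 eC"
  using assms unfolding good_def by blast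

lemma good_neg: assumes "good P" shows "good (\<lambda>eA eB eC. \<not> P eA eB eC)"
proof -
  obtain FS N where a: "finite FS" "FS \<subseteq> Lin" "0 < N"
    "\<And>eA e1 e2 eC. rel FS N e1 e2 \<Longrightarrow> P eA e1 eC \<Longrightarrow> P eA e2 eC" using goodE[OF assms] by metis
  show ?thesis
  proof (rule goodI[OF a(1-3)])
    fix eA e1 e2 eC assume "rel FS N e1 e2" "\<not> P eA e1 eC"
    thus "\<not> P eA e2 eC" using a(4) rel_sym by blast
  qed
qed

lemma good_conj: assumes "good P" "good Q" shows "good (\<lambda>eA eB eC. P eA eB eC \<and> Q eA eB eC)"
proof -
  obtain FS1 N1 where a: "finite FS1" "FS1 \<subseteq> Lin" "0 < N1"
    "\<And>eA e1 e2 eC. rel FS1 N1 e1 e2 \<Longrightarrow> P eA e1 eC \<Longrightarrow> P eA e2 eC" using goodE[OF assms(1)] by metis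
  obtain FS2 N2 where b: "finite FS2" "FS2 \<subseteq> Lin" "0 < N2"
    "\<And>eA e1 e2 eC. rel FS2 N2 e1 e2 \<Longrightarrow> Q eA e1 eC \<Longrightarrow> Q eA e2 eC" using goodE[OF assms(2)] by metis
  show ?thesis
  proof (rule goodI[of "FS1 \<union> FS2" "N1 * N2"])
    fix eA e1 e2 eC assume r: "rel (FS1 \<union> FS2) (N1 * N2) e1 e2" and pq: "P eA e1 eC \<and> Q eA e1 eC"
    have "rel FS1 N1 e1 e2" by (rule rel_mono[OF r]) auto
    moreover have "rel FS2 N2 e1 e2" by (rule rel_mono[OF r]) auto
    ultimately show "P eA e2 eC \<and> Q eA e2 eC" using a(4) b(4) pq by blast
  qed (use a b in auto)
qed

lemma good_exA: assumes "good P" shows "good (\<lambda>eA eB eC. \<exists>x. P (eA(i := x)) eB eC)"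
proof -
  obtain FS N where a: "finite FS" "FS \<subseteq> Lin" "0 < N"
    "\<And>eA e1 e2 eC. rel FS N e1 e2 \<Longrightarrow> P eA e1 eC \<Longrightarrow> P eA e2 eC" using goodE[OF assms] by metis
  show ?thesis
  proof (rule goodI[OF a(1-3)])
    fix eA e1 e2 eC assume "rel FS N e1 e2" "\<exists>x. P (eA(i := x)) e1 eC"
    thus "\<exists>x. P (eA(i := x)) e2 eC" using a(4) by blast
  qed
qed

lemma good_exC: assumes "good P" shows "good (\<lambda>eA eB eC. \<exists>x. P eA eB (eC(i := x)))"
proof -
  obtain FS N where a: "finite FS" "FS \<subseteq> Lin" "0 < N"
    "\<And>eA e1 e2 eC. rel FS N e1 e2 \<Longrightarrow> P eA e1 eC \<Longrightarrow> P eA e2 eC" using goodE[OF assms] by metis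
  show ?thesis
  proof (rule goodI[OF a(1-3)])
    fix eA e1 e2 eC assume "rel FS N e1 e2" "\<exists>x. P eA e1 (eC(i := x))"
    thus "\<exists>x. P eA e2 (eC(i := x))" using a(4) by blast
  qed
qed

lemma good_const: "(\<And>eA e1 e2 eC. P eA e1 eC = P eA e2 eC) \<Longrightarrow> good P"
  unfolding good_def by (rule exI[of _ "{}"], rule exI[of _ 1]) auto

lemma evalB_lin: "\<exists>F H. F \<in> Lin \<and> (\<forall>eA eB. evalB \<iota> FA eA eB t = F eB + \<iota> (H eA))"
proof (induct t)
  case (VarB i) show ?case by (rule exI[of _ "\<lambda>e. e i"], rule exI[of _ "\<lambda>_. 0"]) (auto simp: iota0 intro: Lin.intros)
next
  case ZeroB show ?case by (rule exI[of _ "\<lambda>e. 0"], rule exI[of _ "\<lambda>_. 0"]) (auto simp: iota0 intro: Lin.intros)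
next
  case (AddB s t)
  then obtain F1 H1 F2 H2 where "F1 \<in> Lin" "\<forall>eA eB. evalB \<iota> FA eA eB s = F1 eB + \<iota> (H1 eA)"
    "F2 \<in> Lin" "\<forall>eA eB. evalB \<iota> FA eA eB t = F2 eB + \<iota> (H2 eA)" by blast
  thus ?case by (intro exI[of _ "\<lambda>e. F1 e + F2 e"] exI[of _ "\<lambda>e. H1 e + H2 e"]) (auto simp: iota_hom algebra_simps intro: Lin.intros)
next
  case (NegB s)
  then obtain F1 H1 where "F1 \<in> Lin" "\<forall>eA eB. evalB \<iota> FA eA eB s = F1 eB + \<iota> (H1 eA)" by blast
  thus ?case by (intro exI[of _ "\<lambda>e. - F1 e"] exI[of _ "\<lambda>e. - H1 e"]) (auto simp: iota_neg algebra_simps intro: Lin.intros)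
next
  case (Iota s)
  show ?case by (rule exI[of _ "\<lambda>e. 0"], rule exI[of _ "\<lambda>eA. evalA FA eA s"]) (auto intro: Lin.intros)
qed

lemma evalC_dep: "\<exists>FS. finite FS \<and> FS \<subseteq> Lin \<and> (\<forall>eA e1 e2 eC. (\<forall>F\<in>FS. g (F e1) = g (F e2)) \<longrightarrow>
   evalC \<iota> g FA FC eA e1 eC t = evalC \<iota> g FA FC eA e2 eC t)"
proof (induct t)
  case (FunC f ts)
  hence "\<forall>t\<in>set ts. \<exists>FS. finite FS \<and> FS \<subseteq> Lin \<and> (\<forall>eA e1 e2 eC. (\<forall>F\<in>FS. g (F e1) = g (F e2)) \<longrightarrow>
   evalC \<iota> g FA FC eA e1 eC t = evalC \<iota> g FA FC eA e2 eC t)" by blast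
  then obtain FF where FF: "\<forall>t\<in>set ts. finite (FF t) \<and> FF t \<subseteq> Lin \<and> (\<forall>eA e1 e2 eC. (\<forall>F\<in>FF t. g (F e1) = g (F e2)) \<longrightarrow>
   evalC \<iota> g FA FC eA e1 eC t = evalC \<iota> g FA FC eA e2 eC t)" by metis
  show ?case
  proof (rule exI[of _ "\<Union>t\<in>set ts. FF t"], intro conjI allI impI)
    show "finite (\<Union>t\<in>set ts. FF t)" using FF by auto
    show "(\<Union>t\<in>set ts. FF t) \<subseteq> Lin" using FF by auto
    fix eA e1 e2 eC assume h: "\<forall>F\<in>\<Union>t\<in>set ts. FF t. g (F e1) = g (F e2)"
    have "\<forall>t\<in>set ts. evalC \<iota> g FA FC eA e1 eC t = evalC \<iota> g FA FC eA e2 eC t" using FF h by blast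
    hence "map (evalC \<iota> g FA FC eA e1 eC) ts = map (evalC \<iota> g FA FC eA e2 eC) ts" by (simp only: map_eq_conv)
    thus "evalC \<iota> g FA FC eA e1 eC (FunC f ts) = evalC \<iota> g FA FC eA e2 eC (FunC f ts)"
      by (simp only: evalC.simps)
  qed
next
  case (Gmap s)
  obtain F H where "F \<in> Lin" "\<forall>eA eB. evalB \<iota> FA eA eB s = F eB + \<iota> (H eA)" using evalB_lin by blast
  thus ?case by (intro exI[of _ "{F}"]) (auto simp: g_hom)
next
  case (AddC s t)
  then obtain FS1 FS2 where "finite FS1 \<and> FS1 \<subseteq> Lin \<and> (\<forall>eA e1 e2 eC. (\<forall>F\<in>FS1. g (F e1) = g (F e2)) \<longrightarrow>
   evalC \<iota> g FA FC eA e1 eC s = evalC \<iota> g FA FC eA e2 eC s)" "finite FS2 \<and> FS2 \<subseteq> Lin \<and> (\<forall>eA e1 e2 eC. (\<forall>F\<in>FS2. g (F e1) = g (F e2)) \<longrightarrow>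
   evalC \<iota> g FA FC eA e1 eC t = evalC \<iota> g FA FC eA e2 eC t)" by blast
  note h = this
  show ?case
  proof (rule exI[of _ "FS1 \<union> FS2"], intro conjI allI impI)
    show "finite (FS1 \<union> FS2)" "FS1 \<union> FS2 \<subseteq> Lin" using h by auto
    fix eA e1 e2 eC assume a: "\<forall>F\<in>FS1 \<union> FS2. g (F e1) = g (F e2)"
    hence "evalC \<iota> g FA FC eA e1 eC s = evalC \<iota> g FA FC eA e2 eC s"
      "evalC \<iota> g FA FC eA e1 eC t = evalC \<iota> g FA FC eA e2 eC t" using h by blast+
    thus "evalC \<iota> g FA FC eA e1 eC (AddC s t) = evalC \<iota> g FA FC eA e2 eC (AddC s t)" by simp
  qed
qed auto

end


context ses begin

lemma relD: "rel FS N e1 e2 \<Longrightarrow> F \<in> FS \<Longrightarrow> g (F e1) = g (F e2)"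
  "rel FS N e1 e2 \<Longrightarrow> F \<in> FS \<Longrightarrow> \<exists>y. F e1 - F e2 = nmul N y"
  "rel FS N e1 e2 \<Longrightarrow> F \<in> FS \<Longrightarrow> g (F e1) = 0 \<Longrightarrow> F e1 = F e2"
  unfolding rel_def by blast+

lemma relI: "(\<And>F. F \<in> FS \<Longrightarrow> (\<exists>y. F e1 - F e2 = nmul N y) \<and> g (F e1 - F e2) = 0 \<and> (g (F e1) = 0 \<longrightarrow> F e1 - F e2 = 0))
   \<Longrightarrow> rel FS N e1 e2"
  unfolding rel_def
proof (intro ballI conjI impI)
  fix F assume h: "\<And>F. F \<in> FS \<Longrightarrow> (\<exists>y. F e1 - F e2 = nmul N y) \<and> g (F e1 - F e2) = 0 \<and> (g (F e1) = 0 \<longrightarrow> F e1 - F e2 = 0)"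
    and F: "F \<in> FS"
  show "\<exists>y. F e1 - F e2 = nmul N y" using h[OF F] by blast
  show "g (F e1) = g (F e2)" using h[OF F] by (simp add: g_diff)
  show "g (F e1) = 0 \<Longrightarrow> F e1 = F e2" using h[OF F] by simp
qed

lemma good_exB: assumes "good P" shows "good (\<lambda>eA eB eC. \<exists>x. P eA (eB(i := x)) eC)"
proof -
  obtain FS N where a: "finite FS" "FS \<subseteq> Lin" "0 < N"
    "\<And>eA e1 e2 eC. rel FS N e1 e2 \<Longrightarrow> P eA e1 eC \<Longrightarrow> P eA e2 eC" using goodE[OF assms] by metis
  define k :: "((nat \<Rightarrow> 'b) \<Rightarrow> 'b) \<Rightarrow> int" where "k = kc i"
  define mu where "mu F = (\<lambda>e. F (e(i := 0)))" for F :: "(nat \<Rightarrow> 'b) \<Rightarrow> 'b"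
  define FS0 where "FS0 = {F\<in>FS. k F \<noteq> 0}"
  define ss where "ss J = (SOME s. \<exists>G. (\<Sum>F\<in>J. s F * k F) = G \<and> (\<forall>F\<in>J. G dvd k F) \<and> 0 \<le> G \<and> (G = 0 \<longrightarrow> (\<forall>F\<in>J. k F = 0)))" for J
  define GG where "GG J = (\<Sum>F\<in>J. ss J F * k F)" for J
  have bz: "(\<forall>F\<in>J. GG J dvd k F) \<and> 0 \<le> GG J \<and> (GG J = 0 \<longrightarrow> (\<forall>F\<in>J. k F = 0))" if "J \<subseteq> FS" for J
  proof -
    have "finite J" using that a(1) finite_subset by blast
    from someI_ex[OF bezout_set[OF this, of k]] show ?thesis unfolding GG_def ss_def by blast
  qed
  define rho where "rho J = (\<lambda>e. \<Sum>F\<in>J. zmul (ss J F) (mu F e))" for J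
  define nu where "nu J F = (\<lambda>e. zmul (k F div GG J) (rho J e) - mu F e)" for J F
  define FS' where "FS' = mu ` FS \<union> rho ` Pow FS0 \<union> (\<Union>J\<in>Pow FS0. nu J ` J)"
  define Pn where "Pn = (\<Prod>F\<in>FS0. nat \<bar>k F\<bar>)"
  have fin0: "finite FS0" using a(1) unfolding FS0_def by auto
  have Pn_pos: "0 < Pn" unfolding Pn_def using fin0 by (intro prod_pos) (auto simp: FS0_def)
  have muLin: "mu F \<in> Lin" if "F \<in> FS" for F using that a(2) Lin_subst unfolding mu_def by blast
  have rhoLin: "rho J \<in> Lin" if "J \<subseteq> FS" for J
    unfolding rho_def using that a(1) finite_subset
    by (intro Lin_sum) (auto intro!: Lin_zmul muLin)
  have nuLin: "nu J F \<in> Lin" if "J \<subseteq> FS" "F \<in> FS" for J F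
    unfolding nu_def using that by (intro Lin_diff Lin_zmul rhoLin muLin)
  have finFS': "finite FS'" unfolding FS'_def using a(1) fin0 by (auto intro: finite_subset)
  have linFS': "FS' \<subseteq> Lin"
  proof -
    have "rho J \<in> Lin" if "J \<in> Pow FS0" for J using that rhoLin unfolding FS0_def by blast
    moreover have "nu J F \<in> Lin" if "J \<in> Pow FS0" "F \<in> J" for J F using that nuLin unfolding FS0_def by blast
    ultimately show ?thesis unfolding FS'_def using muLin by blast
  qed
  have spec: "F (e(i := x)) = zmul (k F) x + mu F e" if "F \<in> FS" for F e x
    unfolding k_def mu_def using kc_spec that a(2) by blast
  show ?thesis
  proof (rule goodI[OF finFS' linFS', of "N * Pn"])
    show "0 < N * Pn" using a(3) Pn_pos by simp
    fix eA e1 e2 eC assume r: "rel FS' (N * Pn) e1 e2" and ex: "\<exists>x. P eA (e1(i := x)) eC"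
    from ex obtain x1 where x1: "P eA (e1(i := x1)) eC" by blast
    define J where "J = {F\<in>FS0. g (F (e1(i := x1))) = 0}"
    have JFS0: "J \<subseteq> FS0" unfolding J_def by auto
    have JFS: "J \<subseteq> FS" using JFS0 unfolding FS0_def by auto
    have muFS': "mu F \<in> FS'" if "F \<in> FS" for F using that unfolding FS'_def by auto
    obtain w where w: "g w = 0" "\<exists>v. w = nmul N v" "\<forall>F\<in>J. mu F e1 - mu F e2 = zmul (k F) w"
    proof (cases "J = {}")
      case True
      have "\<exists>v. (0::'b) = nmul N v" by (rule exI[of _ 0]) simp
      thus ?thesis using that[of 0] True by (auto simp: g0)
    next
      case False
      define G where "G = GG J"
      have bzJ: "\<forall>F\<in>J. G dvd k F" "0 \<le> G" "G = 0 \<longrightarrow> (\<forall>F\<in>J. k F = 0)" using bz[OF JFS] unfolding G_def by auto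
      obtain F0 where F0: "F0 \<in> J" using False by blast
      have kF0: "k F0 \<noteq> 0" using F0 JFS0 unfolding FS0_def by auto
      have Gpos: "0 < G" using bzJ F0 kF0 by force
      have rhoFS': "rho J \<in> FS'" unfolding FS'_def using JFS0 by auto
      obtain z where z: "rho J e1 - rho J e2 = nmul (N * Pn) z" using relD(2)[OF r rhoFS'] by blast
      have "G dvd k F0" using bzJ F0 by blast
      also have "k F0 dvd int (nat \<bar>k F0\<bar>)" by simp
      also have "int (nat \<bar>k F0\<bar>) dvd int Pn" unfolding Pn_def of_nat_prod
        using F0 JFS0 fin0 by (intro dvd_prodI) auto
      finally have "G dvd int Pn" .
      hence "nat G dvd Pn" using Gpos by (metis int_dvd_int_iff nat_0_le less_imp_le)
      then obtain q where q: "Pn = nat G * q" by blast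
      define w where "w = nmul N (nmul q z)"
      have zw: "zmul G w = rho J e1 - rho J e2"
      proof -
        have "zmul G w = nmul (nat G) (nmul N (nmul q z))" unfolding w_def using Gpos by (simp add: zmul_pos)
        also have "\<dots> = nmul (nat G * (N * q)) z" by (simp add: nmul_mult)
        also have "nat G * (N * q) = N * Pn" using q by simp
        finally show ?thesis using z by simp
      qed
      have gw: "g w = 0"
      proof -
        have "zmul G (g w) = g (rho J e1) - g (rho J e2)" using zw by (simp add: g_zmul[symmetric] g_diff)
        also have "\<dots> = 0" using relD(1)[OF r rhoFS'] by simp
        finally show ?thesis using C_tf_z[of G "g w"] Gpos by simp
      qed
      define c where "c = g x1"
      have gmu: "g (mu l e1) = - zmul (k l) c" if "l \<in> J" for l
      proof -
        have "g (l (e1(i := x1))) = 0" using that unfolding J_def by auto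
        moreover have "l \<in> FS" using that JFS by auto
        ultimately have "zmul (k l) c + g (mu l e1) = 0" using spec[of l e1 x1] by (simp add: g_hom g_zmul c_def)
        thus ?thesis by (simp add: eq_neg_iff_add_eq_0 add.commute)
      qed
      have grho: "g (rho J e1) = - zmul G c"
      proof -
        have "g (rho J e1) = (\<Sum>l\<in>J. zmul (ss J l) (g (mu l e1)))" unfolding rho_def by (simp add: g_sum g_zmul)
        also have "\<dots> = (\<Sum>l\<in>J. - zmul (ss J l * k l) c)" using gmu by (intro sum.cong) (auto simp: zmul_neg_right zmul_mult)
        also have "\<dots> = - zmul G c" unfolding G_def GG_def by (simp add: zmul_sum_left sum_negf)
        finally show ?thesis .
      qed
      show ?thesis
      proof (rule that[OF gw])
        show "\<exists>v. w = nmul N v" unfolding w_def by blast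
        show "\<forall>F\<in>J. mu F e1 - mu F e2 = zmul (k F) w"
        proof
          fix F assume F: "F \<in> J"
          have nuFS': "nu J F \<in> FS'" unfolding FS'_def using JFS0 F by blast
          have dv: "k F div G * G = k F" using bzJ F by simp
          have "g (nu J F e1) = zmul (k F div G) (- zmul G c) + zmul (k F) c"
            unfolding nu_def using grho gmu[OF F] by (simp add: g_diff g_zmul G_def)
          also have "\<dots> = 0" by (simp add: zmul_neg_right zmul_mult[symmetric] dv)
          finally have "nu J F e1 = nu J F e2" using relD(3)[OF r nuFS'] by blast
          hence "mu F e1 - mu F e2 = zmul (k F div G) (rho J e1 - rho J e2)"
            unfolding nu_def G_def by (simp add: zmul_diff_right algebra_simps)
          also have "\<dots> = zmul (k F div G) (zmul G w)" using zw by simp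
          also have "\<dots> = zmul (k F) w" by (simp only: zmul_mult[symmetric] dv)
          finally show "mu F e1 - mu F e2 = zmul (k F) w" .
        qed
      qed
    qed
    obtain v where v: "w = nmul N v" using w(2) by blast
    define x2 where "x2 = x1 + w"
    have "rel FS N (e1(i := x1)) (e2(i := x2))"
    proof (rule relI)
      fix F assume F: "F \<in> FS"
      obtain y where y: "mu F e1 - mu F e2 = nmul (N * Pn) y" using relD(2)[OF r muFS'[OF F]] by blast
      have D: "F (e1(i := x1)) - F (e2(i := x2)) = (mu F e1 - mu F e2) - zmul (k F) w"
        unfolding x2_def using spec[OF F] by (simp add: zmul_add_right algebra_simps)
      have "F (e1(i := x1)) - F (e2(i := x2)) = nmul N (nmul Pn y - zmul (k F) v)"
        unfolding D y v by (simp add: nmul_mult nmul_diff_right zmul_nmul_comm)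
      moreover have "g (F (e1(i := x1)) - F (e2(i := x2))) = 0"
        unfolding D using relD(1)[OF r muFS'[OF F]] w(1) by (simp add: g_diff g_zmul)
      moreover have "F (e1(i := x1)) - F (e2(i := x2)) = 0" if g0': "g (F (e1(i := x1))) = 0"
      proof (cases "k F = 0")
        case True
        hence "g (mu F e1) = 0" using g0' spec[OF F, of e1 x1] by simp
        hence "mu F e1 = mu F e2" using relD(3)[OF r muFS'[OF F]] by blast
        thus ?thesis unfolding D using True by simp
      next
        case False
        hence "F \<in> J" unfolding J_def FS0_def using F g0' by auto
        thus ?thesis unfolding D using w(3) by simp
      qed
      ultimately show "(\<exists>y. F (e1(i := x1)) - F (e2(i := x2)) = nmul N y) \<and>
         g (F (e1(i := x1)) - F (e2(i := x2))) = 0 \<and> (g (F (e1(i := x1))) = 0 \<longrightarrow> F (e1(i := x1)) - F (e2(i := x2)) = 0)"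
        by blast
    qed
    hence "P eA (e2(i := x2)) eC" using a(4) x1 by blast
    thus "\<exists>x. P eA (e2(i := x)) eC" by blast
  qed
qed

end


context ses begin

lemma good_EqB: "good (\<lambda>eA eB eC. evalB \<iota> FA eA eB s = evalB \<iota> FA eA eB t)"
proof -
  obtain F1 H1 where f1: "F1 \<in> Lin" "\<And>eA eB. evalB \<iota> FA eA eB s = F1 eB + \<iota> (H1 eA)" using evalB_lin by blast
  obtain F2 H2 where f2: "F2 \<in> Lin" "\<And>eA eB. evalB \<iota> FA eA eB t = F2 eB + \<iota> (H2 eA)" using evalB_lin by blast
  define D where "D = (\<lambda>e. F1 e - F2 e)"
  have DL: "D \<in> Lin" unfolding D_def using f1 f2 Lin_diff by blast
  show ?thesis
  proof (rule goodI[of "{D}" 1])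
    fix eA e1 e2 eC assume r: "rel {D} 1 e1 e2" and h: "evalB \<iota> FA eA e1 s = evalB \<iota> FA eA e1 t"
    have De1: "D e1 = \<iota> (H2 eA - H1 eA)" using h unfolding f1 f2 D_def
      by (simp add: hom_diff[OF iota_hom] algebra_simps)
    hence "g (D e1) = 0" by simp
    hence "D e1 = D e2" using relD(3)[OF r] by blast
    hence "D e2 = \<iota> (H2 eA - H1 eA)" using De1 by simp
    thus "evalB \<iota> FA eA e2 s = evalB \<iota> FA eA e2 t" unfolding f1 f2 D_def
      by (simp add: hom_diff[OF iota_hom] algebra_simps)
  qed (use DL in auto)
qed

lemma good_DivB: "good (\<lambda>eA eB eC. \<exists>y. evalB \<iota> FA eA eB t = nmul n y)"
proof -
  obtain F H where f: "F \<in> Lin" "\<And>eA eB. evalB \<iota> FA eA eB t = F eB + \<iota> (H eA)" using evalB_lin by blast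
  show ?thesis
  proof (cases "n = 0")
    case True
    show ?thesis
    proof (rule goodI[of "{F}" 1])
      fix eA e1 e2 eC assume r: "rel {F} 1 e1 e2" and h: "\<exists>y. evalB \<iota> FA eA e1 t = nmul n y"
      have Fe1: "F e1 = - \<iota> (H eA)" using h True unfolding f by (simp add: eq_neg_iff_add_eq_0)
      hence "g (F e1) = 0" by (simp add: g_neg)
      hence "F e1 = F e2" using relD(3)[OF r] by blast
      thus "\<exists>y. evalB \<iota> FA eA e2 t = nmul n y" using Fe1 True unfolding f by (simp add: eq_neg_iff_add_eq_0[symmetric])
    qed (use f in auto)
  next
    case False
    show ?thesis
    proof (rule goodI[of "{F}" n])
      fix eA e1 e2 eC assume r: "rel {F} n e1 e2" and h: "\<exists>y. evalB \<iota> FA eA e1 t = nmul n y"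
      obtain y where y: "F e1 + \<iota> (H eA) = nmul n y" using h unfolding f by blast
      obtain y0 where y0: "F e1 - F e2 = nmul n y0" using relD(2)[OF r] by blast
      have "F e2 + \<iota> (H eA) = nmul n (y - y0)" using y y0 by (simp add: nmul_diff_right algebra_simps)
      thus "\<exists>y. evalB \<iota> FA eA e2 t = nmul n y" unfolding f by blast
    qed (use f False in auto)
  qed
qed

lemma good_Cdep: assumes "finite FS" "FS \<subseteq> Lin"
  "\<And>eA e1 e2 eC. (\<forall>F\<in>FS. g (F e1) = g (F e2)) \<Longrightarrow> P eA e1 eC = P eA e2 eC"
  shows "good P"
proof (rule goodI[OF assms(1,2), of 1])
  fix eA e1 e2 eC assume r: "rel FS 1 e1 e2" and p: "P eA e1 eC"
  have "\<forall>F\<in>FS. g (F e1) = g (F e2)" using relD(1)[OF r] by blast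
  thus "P eA e2 eC" using assms(3)[of e1 e2 eA eC] p by simp
qed simp

lemma sat_good: "good (\<lambda>eA eB eC. sat \<iota> g RA FA RC FC eA eB eC \<phi>)"
proof (induct \<phi>)
  case (EqA s t) show ?case by (rule good_const) simp
next
  case (EqB s t) show ?case unfolding sat.simps by (rule good_EqB)
next
  case (EqC s t)
  obtain FS1 where 10: "finite FS1 \<and> FS1 \<subseteq> Lin \<and> (\<forall>eA e1 e2 eC. (\<forall>F\<in>FS1. g (F e1) = g (F e2)) \<longrightarrow>
   evalC \<iota> g FA FC eA e1 eC s = evalC \<iota> g FA FC eA e2 eC s)" using evalC_dep[where FA=FA and FC=FC and t=s] by blast
  note 1 = conjunct1[OF 10] conjunct1[OF conjunct2[OF 10]] conjunct2[OF conjunct2[OF 10]]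
  obtain FS2 where 20: "finite FS2 \<and> FS2 \<subseteq> Lin \<and> (\<forall>eA e1 e2 eC. (\<forall>F\<in>FS2. g (F e1) = g (F e2)) \<longrightarrow>
   evalC \<iota> g FA FC eA e1 eC t = evalC \<iota> g FA FC eA e2 eC t)" using evalC_dep[where FA=FA and FC=FC and t=t] by blast
  note 2 = conjunct1[OF 20] conjunct1[OF conjunct2[OF 20]] conjunct2[OF conjunct2[OF 20]]
  show ?case
  proof (rule good_Cdep[of "FS1 \<union> FS2"])
    fix eA e1 e2 eC assume h: "\<forall>F\<in>FS1 \<union> FS2. g (F e1) = g (F e2)"
    have h1: "\<forall>F\<in>FS1. g (F e1) = g (F e2)" and h2: "\<forall>F\<in>FS2. g (F e1) = g (F e2)" using h by blast+
    have "evalC \<iota> g FA FC eA e1 eC s = evalC \<iota> g FA FC eA e2 eC s" using 1(3) h1 by blast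
    moreover have "evalC \<iota> g FA FC eA e1 eC t = evalC \<iota> g FA FC eA e2 eC t" using 2(3) h2 by blast
    ultimately show "sat \<iota> g RA FA RC FC eA e1 eC (EqC s t) = sat \<iota> g RA FA RC FC eA e2 eC (EqC s t)" by simp
  next
    show "finite (FS1 \<union> FS2)" using 1 2 by simp
    show "FS1 \<union> FS2 \<subseteq> Lin" using 1 2 by simp
  qed
next
  case (RelA r ts) show ?case by (rule good_const) simp
next
  case (RelC r ts)
  have "\<forall>t\<in>set ts. \<exists>FS. finite FS \<and> FS \<subseteq> Lin \<and> (\<forall>eA e1 e2 eC. (\<forall>F\<in>FS. g (F e1) = g (F e2)) \<longrightarrow>
   evalC \<iota> g FA FC eA e1 eC t = evalC \<iota> g FA FC eA e2 eC t)" using evalC_dep by blast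
  then obtain FF where FF: "\<forall>t\<in>set ts. finite (FF t) \<and> FF t \<subseteq> Lin \<and> (\<forall>eA e1 e2 eC. (\<forall>F\<in>FF t. g (F e1) = g (F e2)) \<longrightarrow>
   evalC \<iota> g FA FC eA e1 eC t = evalC \<iota> g FA FC eA e2 eC t)" by metis
  show ?case
  proof (rule good_Cdep[of "\<Union>t\<in>set ts. FF t"])
    fix eA e1 e2 eC assume h: "\<forall>F\<in>\<Union>t\<in>set ts. FF t. g (F e1) = g (F e2)"
    have "\<forall>t\<in>set ts. evalC \<iota> g FA FC eA e1 eC t = evalC \<iota> g FA FC eA e2 eC t" using FF h by blast
    hence "map (evalC \<iota> g FA FC eA e1 eC) ts = map (evalC \<iota> g FA FC eA e2 eC) ts" by (simp only: map_eq_conv)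
    thus "sat \<iota> g RA FA RC FC eA e1 eC (RelC r ts) = sat \<iota> g RA FA RC FC eA e2 eC (RelC r ts)"
      by (simp only: sat.simps)
  next
    show "finite (\<Union>t\<in>set ts. FF t)" using FF by simp
    show "(\<Union>t\<in>set ts. FF t) \<subseteq> Lin" using FF by blast
  qed
next
  case (DivB n t) show ?case unfolding sat.simps by (rule good_DivB)
next
  case (Neg \<phi>) show ?case unfolding sat.simps by (rule good_neg[OF Neg])
next
  case (Conj \<phi> \<psi>) show ?case unfolding sat.simps by (rule good_conj[OF Conj])
next
  case (ExA i \<phi>) show ?case unfolding sat.simps by (rule good_exA[OF ExA])
next
  case (ExB i \<phi>) show ?case unfolding sat.simps by (rule good_exB[OF ExB])
next
  case (ExC i \<phi>) show ?case unfolding sat.simps by (rule good_exC[OF ExC])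
qed

lemma quot_mem: "b \<in> quot_nA \<iota> N b" unfolding quot_nA_def by (auto intro!: exI[of _ 0] simp: iota0)

lemma fiber_fin: assumes "0 < N" shows "finite {quot_nA \<iota> N b | b. g b = c}"
proof -
  define Gc where "Gc = {b. g b = c}"
  define rep where "rep q = (SOME b. g b = c \<and> quot_nB N b = q)" for q
  have same: "quot_nA \<iota> N b = quot_nA \<iota> N b'" if "g b = g b'" "quot_nB N b = quot_nB N b'" for b b'
  proof -
    have "b' \<in> quot_nB N b" using that(2) unfolding quot_nB_def by (auto intro!: exI[of _ 0])
    then obtain y where y: "b' = b + nmul N y" unfolding quot_nB_def by blast
    have "nmul N (g y) = 0" using that(1) y by (simp add: g_hom g_nmul)
    hence "g y = 0" using C_tf assms by blast
    then obtain a where a: "y = \<iota> a" using ker_g by blast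
    show ?thesis unfolding quot_nA_def y a
    proof (intro Collect_cong iffI; elim exE conjE)
      fix x a' assume "x = b + nmul N (\<iota> a) + nmul N (\<iota> a')"
      thus "\<exists>a''. x = b + nmul N (\<iota> a'') \<and> True" by (intro exI[of _ "a + a'"]) (simp add: iota_hom nmul_add_right add.assoc)
    next
      fix x a' assume "x = b + nmul N (\<iota> a')"
      thus "\<exists>a''. x = b + nmul N (\<iota> a) + nmul N (\<iota> a'') \<and> True"
        by (intro exI[of _ "a' - a"]) (simp add: hom_diff[OF iota_hom] nmul_diff_right)
    qed
  qed
  have "{quot_nA \<iota> N b | b. g b = c} \<subseteq> (\<lambda>q. quot_nA \<iota> N (rep q)) ` range (quot_nB N)"
  proof
    fix Q assume "Q \<in> {quot_nA \<iota> N b | b. g b = c}"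
    then obtain b where b: "Q = quot_nA \<iota> N b" "g b = c" by blast
    have "\<exists>b'. g b' = c \<and> quot_nB N b' = quot_nB N b" using b by blast
    hence "g (rep (quot_nB N b)) = c \<and> quot_nB N (rep (quot_nB N b)) = quot_nB N b"
      unfolding rep_def by (rule someI_ex)
    hence "Q = quot_nA \<iota> N (rep (quot_nB N b))" using same b by metis
    thus "Q \<in> (\<lambda>q. quot_nA \<iota> N (rep q)) ` range (quot_nB N)" by blast
  qed
  thus ?thesis using B_fin[OF assms] finite_surj by blast
qed

lemma subsing_fin: "(\<And>x y. x \<in> S \<Longrightarrow> y \<in> S \<Longrightarrow> x = y) \<Longrightarrow> finite S"
  by (metis finite.emptyI finite_insert subsetI singletonI subset_singletonD)

lemma main:
  fixes RA :: "'ra \<Rightarrow> 'a list \<Rightarrow> bool" and FA :: "'fa \<Rightarrow> 'a list \<Rightarrow> 'a"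
    and RC :: "'rc \<Rightarrow> 'c list \<Rightarrow> bool" and FC :: "'fc \<Rightarrow> 'c list \<Rightarrow> 'c"
  assumes "definable_B \<iota> g RA FA RC FC X" shows "\<exists>n>0. almost_saturated (quot_nA \<iota> n) UNIV X"
proof -
  obtain \<phi> :: "('ra, 'fa, 'rc, 'fc) fml" and eA eB eC where X: "X = {b. sat \<iota> g RA FA RC FC eA (eB(0 := b)) eC \<phi>}"
    using assms unfolding definable_B_def by blast
  obtain FS N where a: "finite FS" "FS \<subseteq> Lin" "0 < N"
    "\<And>eA e1 e2 eC. rel FS N e1 e2 \<Longrightarrow> sat \<iota> g RA FA RC FC eA e1 eC \<phi> \<Longrightarrow> sat \<iota> g RA FA RC FC eA e2 eC \<phi>"
    using goodE[OF sat_good] by metis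
  define k :: "((nat \<Rightarrow> 'b) \<Rightarrow> 'b) \<Rightarrow> int" where "k = kc 0"
  define mu where "mu F = F (eB(0 := 0))" for F :: "(nat \<Rightarrow> 'b) \<Rightarrow> 'b"
  have spec: "F (eB(0 := x)) = zmul (k F) x + mu F" if "F \<in> FS" for F x
    unfolding k_def mu_def using kc_spec that a(2) by blast
  define Fin where "Fin = (\<Union>F\<in>FS. {c. k F \<noteq> 0 \<and> zmul (k F) c = - g (mu F)})"
  have finFin: "finite Fin" unfolding Fin_def
  proof (intro finite_UN_I a(1) subsing_fin)
    fix F x y assume "x \<in> {c. k F \<noteq> 0 \<and> zmul (k F) c = - g (mu F)}" "y \<in> {c. k F \<noteq> 0 \<and> zmul (k F) c = - g (mu F)}"
    thus "x = y" using C_tf_inj[of "k F" x y] by simp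
  qed
  define Q where "Q = quot_nA \<iota> N"
  have "Q ` X \<inter> Q ` (UNIV - X) \<subseteq> (\<Union>c\<in>Fin. {quot_nA \<iota> N b | b. g b = c})"
  proof
    fix q assume "q \<in> Q ` X \<inter> Q ` (UNIV - X)"
    then obtain b1 b2 where b: "b1 \<in> X" "b2 \<notin> X" "q = Q b1" "Q b2 = Q b1" by blast
    have "b2 \<in> Q b1" using b(4) quot_mem unfolding Q_def by metis
    then obtain aa where b2: "b2 = b1 + nmul N (\<iota> aa)" unfolding Q_def quot_nA_def by blast
    have "g b1 \<in> Fin"
    proof (rule ccontr)
      assume nF: "g b1 \<notin> Fin"
      have "rel FS N (eB(0 := b1)) (eB(0 := b2))"
      proof (rule relI)
        fix F assume F: "F \<in> FS"
        have D: "F (eB(0 := b1)) - F (eB(0 := b2)) = nmul N (- zmul (k F) (\<iota> aa))"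
          using spec[OF F] b2 by (simp add: zmul_add_right zmul_nmul_comm nmul_neg_right)
        moreover have "g (F (eB(0 := b1)) - F (eB(0 := b2))) = 0"
          unfolding D by (simp add: g_nmul g_neg g_zmul)
        moreover have "F (eB(0 := b1)) - F (eB(0 := b2)) = 0" if g0': "g (F (eB(0 := b1))) = 0"
        proof (cases "k F = 0")
          case True thus ?thesis unfolding D by simp
        next
          case False
          have "zmul (k F) (g b1) + g (mu F) = 0" using g0' spec[OF F] by (simp add: g_hom g_zmul)
          hence "zmul (k F) (g b1) = - g (mu F)" by (simp add: eq_neg_iff_add_eq_0)
          hence "g b1 \<in> Fin" unfolding Fin_def using F False by blast
          thus ?thesis using nF by blast
        qed
        ultimately show "(\<exists>y. F (eB(0 := b1)) - F (eB(0 := b2)) = nmul N y) \<and>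
          g (F (eB(0 := b1)) - F (eB(0 := b2))) = 0 \<and>
          (g (F (eB(0 := b1))) = 0 \<longrightarrow> F (eB(0 := b1)) - F (eB(0 := b2)) = 0)" by blast
      qed
      hence "b2 \<in> X" using a(4) b(1) unfolding X by blast
      thus False using b(2) by blast
    qed
    thus "q \<in> (\<Union>c\<in>Fin. {quot_nA \<iota> N b | b. g b = c})" using b(3) unfolding Q_def by blast
  qed
  moreover have "finite (\<Union>c\<in>Fin. {quot_nA \<iota> N b | b. g b = c})"
    using finFin fiber_fin[OF a(3)] by blast
  ultimately show ?thesis unfolding almost_saturated_def Q_def using a(3) finite_subset by blast
qed

end

theorem lemma2p36:
  fixes \<iota> :: "'a::ab_group_add \<Rightarrow> 'b::ab_group_add"
    and g :: "'b \<Rightarrow> 'c::ab_group_add"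
    and RA :: "'ra \<Rightarrow> 'a list \<Rightarrow> bool" and FA :: "'fa \<Rightarrow> 'a list \<Rightarrow> 'a"
    and RC :: "'rc \<Rightarrow> 'c list \<Rightarrow> bool" and FC :: "'fc \<Rightarrow> 'c list \<Rightarrow> 'c"
    and X :: "'b set"
  assumes iota_hom: "\<And>x y. \<iota> (x + y) = \<iota> x + \<iota> y"
    and iota_inj: "inj \<iota>"
    and g_hom: "\<And>x y. g (x + y) = g x + g y"
    and g_surj: "surj g"
    and exact: "{b. g b = 0} = range \<iota>"
    and C_torsion_free: "\<And>n c. n > 0 \<Longrightarrow> nmul n (c::'c) = 0 \<Longrightarrow> c = 0"
    and B_mod_nB_finite: "\<And>n. n > 0 \<Longrightarrow> finite (range (quot_nB n :: 'b \<Rightarrow> 'b set))"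
    and X_definable: "definable_B \<iota> g RA FA RC FC X"
  shows "\<exists>n>0. almost_saturated (quot_nA \<iota> n) UNIV X"
  proof -
  interpret ses \<iota> g
    using iota_hom iota_inj g_hom exact C_torsion_free B_mod_nB_finite by unfold_locales
  show ?thesis by (rule main[OF X_definable])
qed

end
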